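(* Consider a system with a finite set $S$ of tasks, periods $\tau_X$, frame length $T=\mathrm{lcm}\{\tau_X : X\in S\}$, per-execution rewards $r^1_X\ge r^2_X\ge\dots\ge r^{\tau_X}_X\ge 0$ and minimum average reward requirements $q^*_X>0$ (as described in the context). The system is feasible only if there exist real numbers $\{f^i_X : X\in S,\ 1\le i\le \tau_X\}$ such that (1) $q^*_X\le \sum_{i=1}^{\tau_X} f^i_X r^i_X$ for all $X\in S$; (2) $0\le f^i_X\le T/\tau_X$ for all $X\in S$ and $1\le i\le\tau_X$; (3) $\sum_{X\in S}\sum_{i=1}^{\tau_X} f^i_X\le T$.
   Context: A system consists of a finite set $S$ of tasks. Time is slotted, $t\in\{0,1,2,\dots\}$. Each task $X\in S$ has a period $\tau_X$ (a positive integer); time is partitioned into consecutive periods of $X$ of $\tau_X$ slots each, the first starting at $t=0$. In each period, task $X$ has one job, which is removed from the system at the end of that period. Let $T$ be the least common multiple of $\{\tau_X : X\in S\}$; time is partitioned into consecutive frames of $T$ slots each, the first starting at $t=0$, so each frame contains $T/\tau_X$ periods of $X$. A scheduling policy (possibly randomized, possibly history dependent) chooses in each time slot either to idle or to execute the job of exactly one task; a job may be executed in any number of slots within its period. Each task $X$ has rewards $r^1_X\ge r^2_X\ge\dots\ge r^{\tau_X}_X\ge 0$: when the job of $X$ is executed for the $i$-th time within a period, $X$ obtains reward $r^i_X$. Let $s_X(t)$ be the total reward obtained by $X$ between time $0$ and time $t$; the average reward of $X$ is $q_X=\liminf_{t\to\infty} s_X(t)/(t/T)$. Each task has a minimum average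 reward requirement $q^*_X>0$. A policy fulfills the system if under it $q_X\ge q^*_X$ with probability 1 for all $X\in S$. The system is feasible if some scheduling policy fulfills it. *)

theory Defs
  imports "HOL-Probability.Probability"
begin

text \<open>A schedule is a function from time slots to \<open>'a option\<close>:
  \<open>None\<close> means idle, \<open>Some X\<close> means the job of task X is executed.\<close>

definition exec_index :: "('a \<Rightarrow> nat) \<Rightarrow> (nat \<Rightarrow> 'a option) \<Rightarrow> 'a \<Rightarrow> nat \<Rightarrow> nat" where
  "exec_index tau \<sigma> X u =
     card {u'. u' \<le> u \<and> u' div tau X = u div tau X \<and> \<sigma> u' = Some X}"

definition slot_reward ::
  "('a \<Rightarrow> nat) \<Rightarrow> ('a \<Rightarrow> nat \<Rightarrow> real) \<Rightarrow> (nat \<Rightarrow> 'a option) \<Rightarrow> 'a \<Rightarrow> nat \<Rightarrow> real" where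
  "slot_reward tau r \<sigma> X u =
     (if \<sigma> u = Some X then r X (exec_index tau \<sigma> X u) else 0)"

definition total_reward ::
  "('a \<Rightarrow> nat) \<Rightarrow> ('a \<Rightarrow> nat \<Rightarrow> real) \<Rightarrow> (nat \<Rightarrow> 'a option) \<Rightarrow> 'a \<Rightarrow> nat \<Rightarrow> real" where
  "total_reward tau r \<sigma> X t = (\<Sum>u<t. slot_reward tau r \<sigma> X u)"

definition frame_len :: "'a set \<Rightarrow> ('a \<Rightarrow> nat) \<Rightarrow> nat" where
  "frame_len S tau = Lcm (tau ` S)"

definition avg_reward ::
  "'a set \<Rightarrow> ('a \<Rightarrow> nat) \<Rightarrow> ('a \<Rightarrow> nat \<Rightarrow> real) \<Rightarrow> (nat \<Rightarrow> 'a option) \<Rightarrow> 'a \<Rightarrow> ereal" where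
  "avg_reward S tau r \<sigma> X =
     liminf (\<lambda>t. ereal (total_reward tau r \<sigma> X t / (real t / real (frame_len S tau))))"

text \<open>A (possibly randomized, history-dependent) policy is represented by the random
  schedule it generates: a process \<open>sched\<close> on a probability space M.\<close>
definition fulfills ::
  "'b measure \<Rightarrow> ('b \<Rightarrow> nat \<Rightarrow> 'a option) \<Rightarrow> 'a set \<Rightarrow> ('a \<Rightarrow> nat) \<Rightarrow>
   ('a \<Rightarrow> nat \<Rightarrow> real) \<Rightarrow> ('a \<Rightarrow> real) \<Rightarrow> bool" where
  "fulfills M sched S tau r qstar \<longleftrightarrow>
     prob_space M \<and>
     (\<forall>\<omega>\<in>space M. \<forall>t. sched \<omega> t \<in> insert None (Some ` S)) \<and>
     (\<forall>X\<in>S. AE \<omega> in M. ereal (qstar X) \<le> avg_reward S tau r (sched \<omega>) X)"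

end

theory Submission imports Defs begin
lemma period_sub:
  assumes "(t::nat) > 0"
  shows "{u'. u' div t = q} \<subseteq> {q*t..<q*t+t}"
proof
  fix u assume "u \<in> {u'. u' div t = q}"
  hence "u div t = q" by simp
  moreover have "u = u div t * t + u mod t" by simp
  moreover have "u mod t < t" using assms by simp
  ultimately show "u \<in> {q*t..<q*t+t}" by auto
qed

lemma exec_index_range:
  assumes "tau X > 0" "\<sigma> u = Some X"
  shows "exec_index tau \<sigma> X u \<in> {1..tau X}"
proof -
  let ?A = "{u'. u' \<le> u \<and> u' div tau X = u div tau X \<and> \<sigma> u' = Some X}"
  have sub: "?A \<subseteq> {u div tau X * tau X..<u div tau X * tau X + tau X}"
    using period_sub[OF assms(1), of "u div tau X"] by auto
  hence fin: "finite ?A" by (rule finite_subset) simp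
  have "u \<in> ?A" using assms by simp
  hence "card ?A \<ge> 1" using fin by (metis One_nat_def Suc_leI card_gt_0_iff empty_iff)
  moreover have "card ?A \<le> tau X" using card_mono[OF _ sub] by simp
  ultimately show ?thesis unfolding exec_index_def by simp
qed

lemma exec_index_inj:
  assumes "tau X > 0" "\<sigma> u = Some X" "\<sigma> v = Some X" "u div tau X = v div tau X"
    "exec_index tau \<sigma> X u = exec_index tau \<sigma> X v"
  shows "u = v"
proof (rule ccontr)
  assume ne: "u \<noteq> v"
  have key: "exec_index tau \<sigma> X a < exec_index tau \<sigma> X b"
    if "\<sigma> a = Some X" "\<sigma> b = Some X" "a div tau X = b div tau X" "a < b" for a b
  proof -
    let ?A = "{u'. u' \<le> a \<and> u' div tau X = a div tau X \<and> \<sigma> u' = Some X}"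
    let ?B = "{u'. u' \<le> b \<and> u' div tau X = b div tau X \<and> \<sigma> u' = Some X}"
    have sub: "?B \<subseteq> {b div tau X * tau X..<b div tau X * tau X + tau X}"
      using period_sub[OF assms(1), of "b div tau X"] by auto
    hence fin: "finite ?B" by (rule finite_subset) simp
    have s1: "?A \<subseteq> ?B" using that by auto
    have "b \<in> ?B" "b \<notin> ?A" using that by auto
    hence "?A \<subset> ?B" using s1 by blast
    thus ?thesis unfolding exec_index_def using psubset_card_mono[OF fin] by blast
  qed
  show False
  proof (cases "u < v")
    case True thus False using key[of u v] assms by simp
  next
    case False hence "v < u" using ne by simp
    thus False using key[of v u] assms by simp
  qed
qed

lemma comb:
  fixes \<sigma> :: "nat \<Rightarrow> 'a option"
  assumes fin: "finite S" and tp: "\<And>X. X \<in> S \<Longrightarrow> tau X > 0"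
    and dv: "\<And>X. X \<in> S \<Longrightarrow> tau X dvd L"
    and rng: "\<And>t. \<sigma> t \<in> insert None (Some ` S)"
  defines "c \<equiv> \<lambda>X i. card {u. u < L \<and> \<sigma> u = Some X \<and> exec_index tau \<sigma> X u = i}"
  shows "\<forall>X\<in>S. total_reward tau r \<sigma> X L = (\<Sum>i=1..tau X. real (c X i) * r X i)"
    and "\<forall>X\<in>S. \<forall>i. c X i \<le> L div tau X"
    and "(\<Sum>X\<in>S. \<Sum>i=1..tau X. c X i) \<le> L"
proof -
  let ?B = "\<lambda>X. {u. u < L \<and> \<sigma> u = Some X}"
  have grp: "\<And>X. X \<in> S \<Longrightarrow> exec_index tau \<sigma> X ` ?B X \<subseteq> {1..tau X}"
  proof
    fix X y assume X: "X \<in> S" and "y \<in> exec_index tau \<sigma> X ` ?B X"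
    then obtain u where "\<sigma> u = Some X" "y = exec_index tau \<sigma> X u" by auto
    thus "y \<in> {1..tau X}" using exec_index_range[of tau X \<sigma> u] tp[OF X] by simp
  qed
  have fB: "\<And>X. finite (?B X)" by simp
  have ceq: "\<And>X i. {x \<in> ?B X. exec_index tau \<sigma> X x = i} = {u. u < L \<and> \<sigma> u = Some X \<and> exec_index tau \<sigma> X u = i}"
    by auto
  show "\<forall>X\<in>S. total_reward tau r \<sigma> X L = (\<Sum>i=1..tau X. real (c X i) * r X i)"
  proof
    fix X assume X: "X \<in> S"
    have "total_reward tau r \<sigma> X L = (\<Sum>u\<in>?B X. r X (exec_index tau \<sigma> X u))"
    proof -
      have "total_reward tau r \<sigma> X L = (\<Sum>u\<in>{x\<in>{..<L}. \<sigma> x = Some X}. r X (exec_index tau \<sigma> X u))"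
        unfolding total_reward_def slot_reward_def by (rule sum.inter_filter[symmetric]) simp
      moreover have "{x\<in>{..<L}. \<sigma> x = Some X} = ?B X" by auto
      ultimately show ?thesis by simp
    qed
    also have "\<dots> = (\<Sum>i=1..tau X. \<Sum>u\<in>{x \<in> ?B X. exec_index tau \<sigma> X x = i}. r X (exec_index tau \<sigma> X u))"
      by (rule sum.group[OF fB _ grp[OF X], symmetric]) simp
    also have "\<dots> = (\<Sum>i=1..tau X. real (c X i) * r X i)"
    proof (rule sum.cong[OF refl])
      fix i
      have "(\<Sum>u\<in>{x \<in> ?B X. exec_index tau \<sigma> X x = i}. r X (exec_index tau \<sigma> X u))
          = (\<Sum>u\<in>{x \<in> ?B X. exec_index tau \<sigma> X x = i}. r X i)" by (rule sum.cong) auto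
      thus "(\<Sum>u\<in>{x \<in> ?B X. exec_index tau \<sigma> X x = i}. r X (exec_index tau \<sigma> X u)) = real (c X i) * r X i"
        using ceq unfolding c_def by simp
    qed
    finally show "total_reward tau r \<sigma> X L = (\<Sum>i=1..tau X. real (c X i) * r X i)" .
  qed
  show "\<forall>X\<in>S. \<forall>i. c X i \<le> L div tau X"
  proof (intro ballI allI)
    fix X i assume X: "X \<in> S"
    let ?C = "{u. u < L \<and> \<sigma> u = Some X \<and> exec_index tau \<sigma> X u = i}"
    have "inj_on (\<lambda>u. u div tau X) ?C"
    proof (rule inj_onI)
      fix a b assume "a \<in> ?C" "b \<in> ?C" "a div tau X = b div tau X"
      thus "a = b" using exec_index_inj[of tau X \<sigma> a b] tp[OF X] by simp
    qed
    moreover have "(\<lambda>u. u div tau X) ` ?C \<subseteq> {..<L div tau X}"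
    proof
      fix y assume "y \<in> (\<lambda>u. u div tau X) ` ?C"
      then obtain u where u: "u < L" "y = u div tau X" by auto
      obtain k where k: "L = tau X * k" using dv[OF X] by blast
      have "u div tau X < k" using u k tp[OF X]
        by (simp add: div_less_iff_less_mult mult.commute)
      thus "y \<in> {..<L div tau X}" using u k tp[OF X] by simp
    qed
    ultimately show "c X i \<le> L div tau X" unfolding c_def
      using card_inj_on_le[of _ ?C "{..<L div tau X}"] by simp
  qed
  have "(\<Sum>X\<in>S. \<Sum>i=1..tau X. c X i) = (\<Sum>X\<in>S. card (?B X))"
  proof (rule sum.cong[OF refl])
    fix X assume X: "X \<in> S"
    have "(\<Sum>i=1..tau X. c X i) = (\<Sum>i=1..tau X. \<Sum>u\<in>{x \<in> ?B X. exec_index tau \<sigma> X x = i}. (1::nat))"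
      unfolding c_def using ceq by simp
    also have "\<dots> = (\<Sum>u\<in>?B X. (1::nat))" by (rule sum.group[OF fB _ grp[OF X]]) simp
    also have "\<dots> = card (?B X)" by simp
    finally show "(\<Sum>i=1..tau X. c X i) = card (?B X)" .
  qed
  also have "\<dots> = (\<Sum>X\<in>S. \<Sum>u\<in>{x\<in>{u. u < L \<and> \<sigma> u \<noteq> None}. the (\<sigma> x) = X}. (1::nat))"
  proof (rule sum.cong[OF refl])
    fix X assume "X \<in> S"
    have "{x\<in>{u. u < L \<and> \<sigma> u \<noteq> None}. the (\<sigma> x) = X} = ?B X" by auto
    thus "card (?B X) = (\<Sum>u\<in>{x\<in>{u. u < L \<and> \<sigma> u \<noteq> None}. the (\<sigma> x) = X}. (1::nat))" by simp
  qed
  also have "\<dots> = card {u. u < L \<and> \<sigma> u \<noteq> None}"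
  proof -
    have "(\<lambda>x. the (\<sigma> x)) ` {u. u < L \<and> \<sigma> u \<noteq> None} \<subseteq> S"
    proof
      fix y assume "y \<in> (\<lambda>x. the (\<sigma> x)) ` {u. u < L \<and> \<sigma> u \<noteq> None}"
      then obtain u where "\<sigma> u \<noteq> None" "y = the (\<sigma> u)" by auto
      thus "y \<in> S" using rng[of u] by auto
    qed
    thus ?thesis using sum.group[OF _ fin, of "{u. u < L \<and> \<sigma> u \<noteq> None}" "\<lambda>x. the (\<sigma> x)" "\<lambda>_. 1::nat"] by simp
  qed
  also have "\<dots> \<le> card {..<L}" by (rule card_mono) auto
  finally show "(\<Sum>X\<in>S. \<Sum>i=1..tau X. c X i) \<le> L" by simp
qed

lemma diag:
  fixes x :: "nat \<Rightarrow> 'i \<Rightarrow> real"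
  assumes "finite I" and "\<And>n i. i \<in> I \<Longrightarrow> \<bar>x n i\<bar> \<le> B"
  shows "\<exists>h L. strict_mono h \<and> (\<forall>i\<in>I. (\<lambda>n. x (h n) i) \<longlonglongrightarrow> L i)"
  using assms
proof (induction I rule: finite_induct)
  case empty
  show ?case by (rule exI[of _ id]) (auto simp: strict_mono_def)
next
  case (insert j I)
  then obtain h L where h: "strict_mono h" and L: "\<forall>i\<in>I. (\<lambda>n. x (h n) i) \<longlonglongrightarrow> L i"
    by blast
  have "bounded (range (\<lambda>n. x (h n) j))"
    unfolding bounded_iff using insert.prems by auto
  then obtain l g where g: "strict_mono g" and l: "((\<lambda>n. x (h n) j) \<circ> g) \<longlonglongrightarrow> l"
    using bounded_imp_convergent_subsequence by blast
  have "\<forall>i\<in>insert j I. (\<lambda>n. x ((h \<circ> g) n) i) \<longlonglongrightarrow> (L(j:=l)) i"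
  proof
    fix i assume i: "i \<in> insert j I"
    show "(\<lambda>n. x ((h \<circ> g) n) i) \<longlonglongrightarrow> (L(j:=l)) i"
    proof (cases "i = j")
      case True thus ?thesis using l by (simp add: o_def)
    next
      case False
      hence "i \<in> I" using i by simp
      hence "((\<lambda>n. x (h n) i) \<circ> g) \<longlonglongrightarrow> L i" using L LIMSEQ_subseq_LIMSEQ g by blast
      thus ?thesis using False by (simp add: o_def)
    qed
  qed
  moreover have "strict_mono (h \<circ> g)" using h g by (rule strict_mono_o)
  ultimately show ?case by blast
qed

theorem lemma1:
  fixes S :: "'a set" and tau :: "'a \<Rightarrow> nat" and r :: "'a \<Rightarrow> nat \<Rightarrow> real"
    and qstar :: "'a \<Rightarrow> real"
    and M :: "'b measure" and sched :: "'b \<Rightarrow> nat \<Rightarrow> 'a option"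
  assumes fin: "finite S"
    and tau_pos: "\<And>X. X \<in> S \<Longrightarrow> tau X > 0"
    and r_mono: "\<And>X i j. X \<in> S \<Longrightarrow> 1 \<le> i \<Longrightarrow> i \<le> j \<Longrightarrow> j \<le> tau X \<Longrightarrow> r X j \<le> r X i"
    and r_nonneg: "\<And>X i. X \<in> S \<Longrightarrow> 1 \<le> i \<Longrightarrow> i \<le> tau X \<Longrightarrow> 0 \<le> r X i"
    and q_pos: "\<And>X. X \<in> S \<Longrightarrow> qstar X > 0"
    and feasible: "fulfills M sched S tau r qstar"
  shows "\<exists>f :: 'a \<Rightarrow> nat \<Rightarrow> real.
           (\<forall>X\<in>S. qstar X \<le> (\<Sum>i=1..tau X. f X i * r X i)) \<and>
           (\<forall>X\<in>S. \<forall>i\<in>{1..tau X}.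
               0 \<le> f X i \<and> f X i \<le> real (frame_len S tau) / real (tau X)) \<and>
           (\<Sum>X\<in>S. \<Sum>i=1..tau X. f X i) \<le> real (frame_len S tau)"
proof -
  define T where "T = frame_len S tau"
  have Tpos: "T > 0" unfolding T_def frame_len_def using fin tau_pos
  proof -
    have "0 \<notin> tau ` S" using tau_pos by (metis image_iff less_irrefl)
    moreover have "finite (tau ` S)" using fin by simp
    ultimately have "Lcm (tau ` S) \<noteq> 0" using Lcm_0_iff_nat by blast
    thus "Lcm (tau ` S) > 0" by simp
  qed
  have Tdvd: "\<And>X. X \<in> S \<Longrightarrow> tau X dvd T" unfolding T_def frame_len_def
    by (simp add: dvd_Lcm)
  have ps: "prob_space M" and rng0: "\<forall>\<omega>\<in>space M. \<forall>t. sched \<omega> t \<in> insert None (Some ` S)"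
    and ae: "\<forall>X\<in>S. AE \<omega> in M. ereal (qstar X) \<le> avg_reward S tau r (sched \<omega>) X"
    using feasible unfolding fulfills_def by auto
  have "AE \<omega> in M. \<forall>X\<in>S. ereal (qstar X) \<le> avg_reward S tau r (sched \<omega>) X"
    using eventually_ball_finite[OF fin ae] .
  hence ae2: "AE \<omega> in M. \<omega> \<in> space M \<and> (\<forall>X\<in>S. ereal (qstar X) \<le> avg_reward S tau r (sched \<omega>) X)"
    using AE_space eventually_conj by blast
  have "\<exists>\<omega>\<in>space M. \<forall>X\<in>S. ereal (qstar X) \<le> avg_reward S tau r (sched \<omega>) X"
  proof (rule ccontr)
    assume "\<not> ?thesis"
    hence "AE \<omega> in M. False" using ae2 by (rule_tac eventually_mono[OF ae2]) auto
    thus False using prob_space.AE_False[OF ps] by simp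
  qed
  then obtain \<omega> where \<omega>: "\<omega> \<in> space M"
    and good: "\<forall>X\<in>S. ereal (qstar X) \<le> avg_reward S tau r (sched \<omega>) X" by blast
  define \<sigma> where "\<sigma> = sched \<omega>"
  have rng: "\<And>t. \<sigma> t \<in> insert None (Some ` S)" using rng0 \<omega> unfolding \<sigma>_def by blast
  have approx: "\<exists>N. N \<ge> 1 \<and> (\<forall>X\<in>S. qstar X - inverse (real (Suc n))
      < total_reward tau r \<sigma> X (N * T) / real N)" for n
  proof -
    have "\<forall>X\<in>S. eventually (\<lambda>t. ereal (qstar X - inverse (real (Suc n)))
        < ereal (total_reward tau r \<sigma> X t / (real t / real T))) sequentially"
    proof
      fix X assume X: "X \<in> S"
      have "ereal (qstar X) \<le> Liminf sequentially (\<lambda>t. ereal (total_reward tau r \<sigma> X t / (real t / real T)))"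
      proof -
        have "ereal (qstar X) \<le> avg_reward S tau r \<sigma> X" using good X unfolding \<sigma>_def by blast
        thus ?thesis by (simp only: avg_reward_def T_def)
      qed
      moreover have "ereal (qstar X - inverse (real (Suc n))) < ereal (qstar X)" by simp
      ultimately show "eventually (\<lambda>t. ereal (qstar X - inverse (real (Suc n)))
        < ereal (total_reward tau r \<sigma> X t / (real t / real T))) sequentially"
        by (rule le_Liminf_iff[THEN iffD1, rule_format])
    qed
    from eventually_ball_finite[OF fin this]
    obtain t0 where t0: "\<And>t. t \<ge> t0 \<Longrightarrow> \<forall>X\<in>S. ereal (qstar X - inverse (real (Suc n)))
        < ereal (total_reward tau r \<sigma> X t / (real t / real T))"
      unfolding eventually_sequentially by blast
    have "Suc t0 * T \<ge> t0" using Tpos by (cases T) auto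
    hence "\<forall>X\<in>S. ereal (qstar X - inverse (real (Suc n)))
        < ereal (total_reward tau r \<sigma> X (Suc t0 * T) / (real (Suc t0 * T) / real T))"
      using t0 by blast
    moreover have eq: "real (Suc t0 * T) / real T = real (Suc t0)" using Tpos by (simp only: of_nat_mult) simp
    ultimately have A: "\<forall>X\<in>S. ereal (qstar X - inverse (real (Suc n)))
        < ereal (total_reward tau r \<sigma> X (Suc t0 * T) / real (Suc t0))" by (simp only: eq)
    have "\<forall>X\<in>S. qstar X - inverse (real (Suc n)) < total_reward tau r \<sigma> X (Suc t0 * T) / real (Suc t0)"
    proof
      fix X assume "X \<in> S"
      thus "qstar X - inverse (real (Suc n)) < total_reward tau r \<sigma> X (Suc t0 * T) / real (Suc t0)"
        using A by (metis less_ereal.simps(1))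
    qed
    thus ?thesis by (intro exI[of _ "Suc t0"] conjI) simp_all
  qed
  then obtain Nf where Nf1: "\<And>n. Nf n \<ge> 1"
    and Nf: "\<And>n. \<forall>X\<in>S. qstar X - inverse (real (Suc n)) < total_reward tau r \<sigma> X (Nf n * T) / real (Nf n)"
    by metis
  define c where "c = (\<lambda>n X i. card {u. u < Nf n * T \<and> \<sigma> u = Some X \<and> exec_index tau \<sigma> X u = i})"
  define fs where "fs = (\<lambda>n X i. real (c n X i) / real (Nf n))"
  have dvL: "\<And>n X. X \<in> S \<Longrightarrow> tau X dvd Nf n * T" using Tdvd by simp
  have f1: "qstar X - inverse (real (Suc n)) < (\<Sum>i=1..tau X. fs n X i * r X i)" if X: "X \<in> S" for n X
  proof -
    have "(\<Sum>i=1..tau X. fs n X i * r X i) = (\<Sum>i=1..tau X. real (c n X i) * r X i) / real (Nf n)"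
      unfolding fs_def by (simp add: sum_divide_distrib)
    also have "\<dots> = total_reward tau r \<sigma> X (Nf n * T) / real (Nf n)"
      using comb(1)[where S=S and tau=tau and L="Nf n * T" and \<sigma>=\<sigma>, OF fin tau_pos dvL[of _ n] rng, where r=r] X unfolding c_def by simp
    finally show ?thesis using Nf X by simp
  qed
  have f2: "0 \<le> fs n X i \<and> fs n X i \<le> real T / real (tau X)" if X: "X \<in> S" for n X i
  proof -
    have "c n X i \<le> Nf n * T div tau X" using comb(2)[where S=S and tau=tau and L="Nf n * T" and \<sigma>=\<sigma>, OF fin tau_pos dvL[of _ n] rng] X unfolding c_def by blast
    hence "real (c n X i) \<le> real (Nf n * T div tau X)" by simp
    also have "\<dots> = real (Nf n) * real T / real (tau X)"
      using real_of_nat_div[OF dvL[OF X, of n]] by simp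
    finally have "real (c n X i) / real (Nf n) \<le> real T / real (tau X)"
      using Nf1[of n] by (simp add: field_simps)
    thus ?thesis unfolding fs_def by simp
  qed
  have f3: "(\<Sum>X\<in>S. \<Sum>i=1..tau X. fs n X i) \<le> real T" for n
  proof -
    have "(\<Sum>X\<in>S. \<Sum>i=1..tau X. fs n X i) = real (\<Sum>X\<in>S. \<Sum>i=1..tau X. c n X i) / real (Nf n)"
      unfolding fs_def by (simp add: sum_divide_distrib)
    also have "\<dots> \<le> real (Nf n * T) / real (Nf n)"
    proof (rule divide_right_mono)
      show "real (\<Sum>X\<in>S. \<Sum>i=1..tau X. c n X i) \<le> real (Nf n * T)"
        unfolding of_nat_le_iff c_def
        using comb(3)[where S=S and tau=tau and L="Nf n * T" and \<sigma>=\<sigma>, OF fin tau_pos dvL[of _ n] rng] .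
    qed simp
    also have "\<dots> = real T" using Nf1[of n] by simp
    finally show ?thesis .
  qed
  define I where "I = (SIGMA X:S. {1..tau X})"
  have finI: "finite I" unfolding I_def using fin by auto
  have bnd: "\<bar>(\<lambda>n p. fs n (fst p) (snd p)) n p\<bar> \<le> real T" if pI: "p \<in> I" for n p
  proof -
    obtain X i where p: "p = (X, i)" "X \<in> S" using pI unfolding I_def by auto
    have "real T / real (tau X) \<le> real T / 1"
      using tau_pos[OF p(2)] by (intro divide_left_mono) simp_all
    hence "real T / real (tau X) \<le> real T" by simp
    thus ?thesis using f2[OF p(2), of n i] p by simp
  qed
  obtain h L where h: "strict_mono h"
    and L: "\<forall>p\<in>I. (\<lambda>n. fs (h n) (fst p) (snd p)) \<longlonglongrightarrow> L p"
    using diag[where I=I and x="\<lambda>n p. fs n (fst p) (snd p)" and B="real T", OF finI bnd] by auto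
  define f where "f = (\<lambda>X i. L (X, i))"
  have lim: "(\<lambda>n. fs (h n) X i) \<longlonglongrightarrow> f X i" if "X \<in> S" "i \<in> {1..tau X}" for X i
    using L that unfolding f_def I_def by force
  show ?thesis
  proof (intro exI[of _ f] conjI ballI)
    fix X assume X: "X \<in> S"
    have l1: "(\<lambda>n. \<Sum>i=1..tau X. fs (h n) X i * r X i) \<longlonglongrightarrow> (\<Sum>i=1..tau X. f X i * r X i)"
      by (intro tendsto_sum tendsto_mult_right lim[OF X]) simp
    have l0: "(\<lambda>n. qstar X + - inverse (real (Suc n))) \<longlonglongrightarrow> qstar X"
      by (rule LIMSEQ_inverse_real_of_nat_add_minus)
    have "qstar X + - inverse (real (Suc n)) \<le> (\<Sum>i=1..tau X. fs (h n) X i * r X i)" for n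
    proof -
      have "n \<le> h n" using seq_suble[OF h] .
      hence "inverse (real (Suc (h n))) \<le> inverse (real (Suc n))"
        by (simp add: le_imp_inverse_le)
      thus ?thesis using f1[OF X, of "h n"] by linarith
    qed
    thus "qstar X \<le> (\<Sum>i=1..tau X. f X i * r X i)"
      using LIMSEQ_le[OF l0 l1] by blast
  next
    fix X i assume X: "X \<in> S" and i: "i \<in> {1..tau X}"
    show "0 \<le> f X i" using LIMSEQ_le_const[OF lim[OF X i]] f2[OF X] by blast
    show "f X i \<le> real (frame_len S tau) / real (tau X)"
      using LIMSEQ_le_const2[OF lim[OF X i]] f2[OF X] unfolding T_def by blast
  next
    have "(\<lambda>n. \<Sum>X\<in>S. \<Sum>i=1..tau X. fs (h n) X i) \<longlonglongrightarrow> (\<Sum>X\<in>S. \<Sum>i=1..tau X. f X i)"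
      by (intro tendsto_sum lim) auto
    thus "(\<Sum>X\<in>S. \<Sum>i=1..tau X. f X i) \<le> real (frame_len S tau)"
      using LIMSEQ_le_const2 f3 unfolding T_def by blast
  qed
qed

end
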